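(* Let $d\ge1$, let $\gamma$ be the standard Gaussian measure $d\gamma(x)=(2\pi)^{-d/2}e^{-|x|^2/2}\,dx$ on $\mathbb{R}^d$, and let $\mathscr{L}=\frac12\Delta-\frac12x\cdot\nabla$ be the classical Ornstein–Uhlenbeck operator, a self-adjoint non-positive operator on $L^2(\mathbb{R}^d,\gamma)$. Then the unitary $C_0$-group $(e^{it\mathscr{L}})_{t\in\mathbb{R}}$ on $L^2(\mathbb{R}^d,\gamma)$ has infinite speed of propagation.
   Context: The semigroup generated by $\mathscr{L}$ is $e^{t\mathscr{L}}f(x)=\int_{\mathbb{R}^d}M_t(x,y)f(y)\,dy$ with $M_t(x,y)=(2\pi)^{-d/2}(1-e^{-2t})^{-d/2}\exp\big(-\frac12\frac{|e^{-t}x-y|^2}{1-e^{-2t}}\big)$. A one-parameter family $(T_t)_{t\in\mathbb{R}}$ of bounded operators on $L^2(E,\mu;\mathscr{H})$ ($\mathscr{H}$ a Hilbert space, here $E=\mathbb{R}^d$, $\mu=\gamma$, $\mathscr{H}=\mathbb{C}$) has speed of propagation $\kappa$ if for all closed $K\subseteq E$, all $u$ and all $t\in\mathbb{R}$, $\operatorname{supp}(u)\subseteq K$ implies $\operatorname{supp}(T_tu)\subseteq K_{\kappa|t|}:=\{x:\operatorname{dist}(x,K)\le\kappa|t|\}$. It has infinite speed of propagation if it does not have speed of propagation $\kappa$ for any finite $\kappa$. *)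

theory Defs
  imports "HOL-Analysis.Analysis"
begin

text \<open>Standard Gaussian measure on a Euclidean space 'a (d = DIM('a) \<ge> 1).\<close>
definition gauss_measure :: "'a::euclidean_space measure" where
  "gauss_measure = density lborel
     (\<lambda>x. ennreal ((2 * pi) powr (- real DIM('a) / 2) * exp (- (norm x)\<^sup>2 / 2)))"

text \<open>Square-integrable complex functions (representatives of elements of L^2(M)).\<close>
definition sq_integrable :: "'a measure \<Rightarrow> ('a \<Rightarrow> complex) \<Rightarrow> bool" where
  "sq_integrable M u \<longleftrightarrow> u \<in> borel_measurable M \<and> integrable M (\<lambda>x. (cmod (u x))\<^sup>2)"

fun hermite :: "nat \<Rightarrow> real \<Rightarrow> real" where
  "hermite 0 x = 1"
| "hermite (Suc 0) x = x"
| "hermite (Suc (Suc n)) x = x * hermite (Suc n) x - real (Suc n) * hermite n x"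

text \<open>Normalised multivariate Hermite polynomials h_alpha: an orthonormal basis of
  L^2(gamma) consisting of eigenfunctions of the Ornstein-Uhlenbeck operator,
  with L h_alpha = -|alpha|/2 h_alpha.\<close>
definition herm :: "('a::euclidean_space \<Rightarrow> nat) \<Rightarrow> 'a \<Rightarrow> real" where
  "herm \<alpha> x = (\<Prod>b\<in>Basis. hermite (\<alpha> b) (x \<bullet> b) / sqrt (fact (\<alpha> b)))"

definition mindex_size :: "('a::euclidean_space \<Rightarrow> nat) \<Rightarrow> nat" where
  "mindex_size \<alpha> = (\<Sum>b\<in>Basis. \<alpha> b)"

text \<open>L^2(gamma) inner product of u with h_alpha (h_alpha is real-valued).\<close>
definition herm_coeff :: "('a::euclidean_space \<Rightarrow> complex) \<Rightarrow> ('a \<Rightarrow> nat) \<Rightarrow> complex" where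
  "herm_coeff u \<alpha> = (LINT x|gauss_measure. u x * complex_of_real (herm \<alpha> x))"

text \<open>ou_group t u v: v is (a representative of) e^{itL} u in L^2(gamma), where
  e^{itL} is defined by spectral calculus for the self-adjoint operator L, i.e.
  e^{itL} h_alpha = e^{-it|alpha|/2} h_alpha.\<close>
definition ou_group :: "real \<Rightarrow> ('a::euclidean_space \<Rightarrow> complex) \<Rightarrow> ('a \<Rightarrow> complex) \<Rightarrow> bool" where
  "ou_group t u v \<longleftrightarrow> sq_integrable gauss_measure u \<and> sq_integrable gauss_measure v \<and>
     (\<forall>\<alpha>. herm_coeff v \<alpha> = exp (- (\<i> * complex_of_real (t * real (mindex_size \<alpha>) / 2))) * herm_coeff u \<alpha>)"

definition ess_supp :: "'a::topological_space measure \<Rightarrow> ('a \<Rightarrow> 'b::zero) \<Rightarrow> 'a set" where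
  "ess_supp M u = - \<Union>{U. open U \<and> (AE x in M. x \<in> U \<longrightarrow> u x = 0)}"

text \<open>K_r = {x. dist(x,K) \<le> r}, with dist(x,{}) = infinity.\<close>
definition enlarge :: "'a::metric_space set \<Rightarrow> real \<Rightarrow> 'a set" where
  "enlarge K r = {x. K \<noteq> {} \<and> infdist x K \<le> r}"

text \<open>Speed of propagation for a family T given as a relation: T t u v means v = T_t u.\<close>
definition has_speed_of_propagation ::
  "'a::metric_space measure \<Rightarrow> real \<Rightarrow> (real \<Rightarrow> ('a \<Rightarrow> 'b::zero) \<Rightarrow> ('a \<Rightarrow> 'b) \<Rightarrow> bool) \<Rightarrow> bool" where
  "has_speed_of_propagation M \<kappa> T \<longleftrightarrow>
     (\<forall>K u t v. closed K \<longrightarrow> T t u v \<longrightarrow> ess_supp M u \<subseteq> K \<longrightarrow>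
        ess_supp M v \<subseteq> enlarge K (\<kappa> * \<bar>t\<bar>))"

definition has_infinite_speed_of_propagation ::
  "'a::metric_space measure \<Rightarrow> (real \<Rightarrow> ('a \<Rightarrow> 'b::zero) \<Rightarrow> ('a \<Rightarrow> 'b) \<Rightarrow> bool) \<Rightarrow> bool" where
  "has_infinite_speed_of_propagation M T \<longleftrightarrow> (\<forall>\<kappa>. \<not> has_speed_of_propagation M \<kappa> T)"

end

theory Submission imports Defs begin

lemma lborel_uminus_eucl: "distr lborel borel uminus = (lborel :: 'a::euclidean_space measure)"
proof -
  have "(lborel::'a measure) = density (distr lborel borel (\<lambda>x. 0 + (-1::real) *\<^sub>R x)) (\<lambda>_. \<bar>-1::real\<bar>^DIM('a))"
    by (rule lborel_affine) simp
  then show ?thesis by (simp add: density_1)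
qed

definition gdens :: "'a::euclidean_space \<Rightarrow> ennreal" where
  "gdens x = ennreal ((2 * pi) powr (- real DIM('a) / 2) * exp (- (norm x)\<^sup>2 / 2))"

lemma gm_def: "gauss_measure = density lborel gdens"
  by (simp add: gauss_measure_def gdens_def[abs_def])

lemma gdens_meas[measurable]: "gdens \<in> borel_measurable borel"
  unfolding gdens_def by measurable

lemma gdens_pos: "0 < gdens x"
  unfolding gdens_def by simp

lemma gdens_le1: "gdens x \<le> 1"
proof -
  have a: "(2 * pi) powr (- real DIM('a) / 2) \<le> 1"
    using pi_gt3 powr_mono[of "- real DIM('a) / 2" 0 "2*pi"] by simp
  have b: "exp (- (norm x)\<^sup>2 / 2) \<le> 1" by simp
  have "(2 * pi) powr (- real DIM('a) / 2) * exp (- (norm x)\<^sup>2 / 2) \<le> 1"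
    using mult_mono[OF a b] by simp
  then show ?thesis unfolding gdens_def by (simp add: ennreal_le_1)
qed

lemma gm_le: "A \<in> sets borel \<Longrightarrow> emeasure gauss_measure A \<le> emeasure lborel A"
proof -
  assume A: "A \<in> sets borel"
  have "emeasure gauss_measure A = (\<integral>\<^sup>+x. gdens x * indicator A x \<partial>lborel)"
    unfolding gm_def using A by (simp add: emeasure_density)
  also have "\<dots> \<le> (\<integral>\<^sup>+x. indicator A x \<partial>lborel)"
    by (intro nn_integral_mono) (auto simp: gdens_le1 split: split_indicator)
  also have "\<dots> = emeasure lborel A" using A by simp
  finally show ?thesis .
qed

lemma gm_fin: "emeasure gauss_measure (cball c r) < \<infinity>"
  using gm_le[of "cball c r"] emeasure_lborel_cball_finite[of c r] by (simp add: order_le_less_trans)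

lemma gdens_sym: "gdens (-x) = gdens x"
  by (simp add: gdens_def)

lemma sets_gm[simp, measurable_cong]: "sets gauss_measure = sets borel"
  by (simp add: gm_def)

lemma space_gm[simp]: "space gauss_measure = UNIV"
  by (simp add: gm_def)

lemma gm_distr: "distr gauss_measure gauss_measure uminus = gauss_measure"
proof -
  have "distr gauss_measure gauss_measure uminus = distr (density lborel (\<lambda>x. gdens (- x))) borel uminus"
    by (intro distr_cong) (simp_all add: gm_def gdens_sym)
  also have "\<dots> = density (distr lborel borel uminus) gdens"
    by (rule density_distr[symmetric]) auto
  also have "\<dots> = gauss_measure" by (simp add: lborel_uminus_eucl gm_def)
  finally show ?thesis .
qed

lemma hermite_neg: "hermite n (-x) = (-1)^n * hermite n x"
  by (induction n x rule: hermite.induct) (auto simp: algebra_simps)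

lemma hermite_cont2: "continuous_on UNIV (hermite n) \<and> continuous_on UNIV (hermite (Suc n))"
proof (induction n)
  case 0
  then show ?case by (auto simp: continuous_on_id continuous_on_const cong: continuous_on_cong)
next
  case (Suc n)
  have "hermite (Suc (Suc n)) = (\<lambda>x. x * hermite (Suc n) x - real (Suc n) * hermite n x)"
    by (rule ext) simp
  with Suc show ?case by (auto intro!: continuous_intros)
qed

lemma hermite_cont: "continuous_on UNIV (hermite n)"
  using hermite_cont2 by blast

lemma herm_neg: "herm \<alpha> (-x) = (-1)^(mindex_size \<alpha>) * herm \<alpha> x"
proof -
  have "(\<Prod>b\<in>Basis. hermite (\<alpha> b) (- x \<bullet> b) / sqrt (fact (\<alpha> b)))
     = (\<Prod>b\<in>Basis. (-1)^(\<alpha> b) * (hermite (\<alpha> b) (x \<bullet> b) / sqrt (fact (\<alpha> b))))"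
    by (intro prod.cong) (auto simp: inner_minus_left hermite_neg)
  also have "\<dots> = (\<Prod>b\<in>Basis. (-1)^(\<alpha> b)) * (\<Prod>b\<in>Basis. hermite (\<alpha> b) (x \<bullet> b) / sqrt (fact (\<alpha> b)))"
    by (rule prod.distrib)
  finally show ?thesis by (simp add: power_sum herm_def mindex_size_def inner_minus_left)
qed

lemma herm_meas[measurable]: "herm \<alpha> \<in> borel_measurable borel"
proof -
  have "continuous_on UNIV (herm \<alpha>)"
    unfolding herm_def[abs_def]
    by (intro continuous_intros continuous_on_compose2[OF hermite_cont]) auto
  then show ?thesis by (rule borel_measurable_continuous_onI)
qed

lemma coeff_neg:
  fixes u :: "'a::euclidean_space \<Rightarrow> complex"
  assumes [measurable]: "u \<in> borel_measurable borel"
  shows "herm_coeff (\<lambda>x. u (-x)) \<alpha> = (-1)^(mindex_size \<alpha>) * herm_coeff u \<alpha>"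
proof -
  define g where "g y = u y * complex_of_real (herm \<alpha> y)" for y
  have gm[measurable]: "g \<in> borel_measurable borel" unfolding g_def by measurable
  have "herm_coeff (\<lambda>x. u (-x)) \<alpha> = (LINT x|gauss_measure. (-1)^(mindex_size \<alpha>) * g (-x))"
    unfolding herm_coeff_def g_def
  proof (intro Bochner_Integration.integral_cong refl)
    fix x
    have m1: "(-1::complex)^(mindex_size \<alpha>) * (-1)^(mindex_size \<alpha>) = 1"
      by (simp flip: power_mult_distrib)
    have "complex_of_real (herm \<alpha> x) = (-1)^(mindex_size \<alpha>) * complex_of_real (herm \<alpha> (-x))"
      by (simp add: herm_neg mult.assoc[symmetric] m1)
    then show "u (- x) * complex_of_real (herm \<alpha> x) =
         (- 1) ^ mindex_size \<alpha> * (u (- x) * complex_of_real (herm \<alpha> (- x)))"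
      by (simp add: ac_simps)
  qed
  also have "\<dots> = (-1)^(mindex_size \<alpha>) * (LINT x|gauss_measure. g (-x))"
    by (rule integral_mult_right_zero)
  also have "(LINT x|gauss_measure. g (-x)) = integral\<^sup>L (distr gauss_measure gauss_measure uminus) g"
    by (rule integral_distr[symmetric]) auto
  also have "\<dots> = herm_coeff u \<alpha>" unfolding gm_distr herm_coeff_def g_def ..
  finally show ?thesis .
qed

lemma exp_2pi: "exp (- (\<i> * complex_of_real (2 * pi * real m / 2))) = (-1)^m"
proof -
  have "- (\<i> * complex_of_real (2 * pi * real m / 2)) = of_nat m * (- (\<i> * of_real pi))"
    by simp
  then have "exp (- (\<i> * complex_of_real (2 * pi * real m / 2))) = exp (- (\<i> * of_real pi)) ^ m"
    by (simp only: exp_of_nat_mult)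
  also have "exp (- (\<i> * of_real pi)) = -1"
    by (simp add: exp_minus)
  finally show ?thesis .
qed

theorem theorem5p2:
  shows "has_infinite_speed_of_propagation (gauss_measure :: 'a::euclidean_space measure)
           (ou_group :: real \<Rightarrow> ('a \<Rightarrow> complex) \<Rightarrow> ('a \<Rightarrow> complex) \<Rightarrow> bool)"
  unfolding has_infinite_speed_of_propagation_def has_speed_of_propagation_def
proof (intro allI notI)
  fix \<kappa> :: real
  assume H: "\<forall>K u t v. closed K \<longrightarrow> ou_group t u v \<longrightarrow> ess_supp (gauss_measure::'a measure) u \<subseteq> K \<longrightarrow>
        ess_supp gauss_measure v \<subseteq> enlarge K (\<kappa> * \<bar>t\<bar>)"
  obtain b :: 'a where b: "b \<in> Basis" using nonempty_Basis by blast
  define r where "r = \<kappa> * \<bar>2 * pi\<bar>"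
  define R where "R = \<bar>r\<bar> + 2"
  define p where "p = R *\<^sub>R b"
  define K where "K = cball p 1"
  define u :: "'a \<Rightarrow> complex" where "u x = (if x \<in> K then 1 else 0)" for x
  define v where "v x = u (-x)" for x
  have normp: "norm p = R" unfolding p_def R_def using b by simp
  have Km[measurable]: "K \<in> sets borel" unfolding K_def by simp
  have um[measurable]: "u \<in> borel_measurable borel" unfolding u_def by measurable
  have vm[measurable]: "v \<in> borel_measurable borel" unfolding v_def by measurable
  have sqi: "sq_integrable gauss_measure w" if "w \<in> borel_measurable borel"
     "\<And>x. (cmod (w x))\<^sup>2 = indicator (cball q 1) x" for w :: "'a \<Rightarrow> complex" and q :: 'a
  proof -
    have "integrable gauss_measure (indicator (cball q 1) :: 'a \<Rightarrow> real)"
      using gm_fin[of q 1] by (simp add: integrable_indicator_iff)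
    then show ?thesis unfolding sq_integrable_def using that by simp
  qed
  have su: "sq_integrable gauss_measure u"
    by (rule sqi[of u p]) (auto simp: u_def K_def split: split_indicator)
  have sv: "sq_integrable gauss_measure v"
  proof (rule sqi[of v "-p"])
    fix x show "(cmod (v x))\<^sup>2 = indicator (cball (- p) 1) x"
    proof -
      have "dist p (-x) = dist (-p) x" using dist_minus[of "-p" x] by simp
      then show ?thesis by (simp add: v_def u_def K_def split: split_indicator)
    qed
  qed simp
  have og: "ou_group (2 * pi) u v"
  proof -
    have ve: "v = (\<lambda>x. u (-x))" by (rule ext) (simp add: v_def)
    show ?thesis unfolding ou_group_def using su sv
      by (simp only: ve coeff_neg[OF um] exp_2pi simp_thms)
  qed
  have esu: "ess_supp gauss_measure u \<subseteq> K"
  proof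
    fix x assume x: "x \<in> ess_supp gauss_measure u"
    show "x \<in> K"
    proof (rule ccontr)
      assume "x \<notin> K"
      moreover have "open (- K)" unfolding K_def by auto
      moreover have "AE y in gauss_measure. y \<in> - K \<longrightarrow> u y = 0" by (simp add: u_def)
      ultimately show False using x unfolding ess_supp_def by blast
    qed
  qed
  have "closed K" unfolding K_def by simp
  from H[rule_format, OF this og esu]
  have sub: "ess_supp gauss_measure v \<subseteq> enlarge K r" unfolding r_def .
  have inv: "-p \<in> ess_supp gauss_measure v"
    unfolding ess_supp_def
  proof (intro ComplI notI)
    assume "- p \<in> \<Union> {U. open U \<and> (AE x in gauss_measure. x \<in> U \<longrightarrow> v x = 0)}"
    then obtain U where U: "open U" "-p \<in> U" "AE x in gauss_measure. x \<in> U \<longrightarrow> v x = 0"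
      by blast
    obtain e where e: "e > 0" "ball (-p) e \<subseteq> U" using U(1,2) open_contains_ball by blast
    define e' where "e' = min e 1"
    have e': "e' > 0" "ball (-p) e' \<subseteq> U" using e unfolding e'_def by auto
    have "AE x in lborel. 0 < gdens x \<longrightarrow> (x \<in> U \<longrightarrow> v x = 0)"
      using U(3) unfolding gm_def by (subst (asm) AE_density) auto
    then have "AE x in lborel. x \<notin> ball (-p) e'"
    proof (rule AE_mp, intro AE_I2 impI notI)
      fix x assume A: "0 < gdens x \<longrightarrow> x \<in> U \<longrightarrow> v x = 0" and xb: "x \<in> ball (- p) e'"
      have "dist p (-x) = dist (-p) x" using dist_minus[of "-p" x] by simp
      then have "-x \<in> K" using xb unfolding K_def e'_def by simp
      then have "v x = 1" by (simp add: v_def u_def)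
      then show False using A gdens_pos xb e' by auto
    qed
    then have "emeasure lborel (ball (-p) e') = 0"
      by (subst (asm) AE_iff_measurable[of "ball (-p) e'"]) auto
    moreover have "emeasure lborel (ball (-p) e') > 0"
      using e' by (simp add: emeasure_ball)
    ultimately show False by simp
  qed
  have "infdist (-p) K \<ge> 2 * R - 1"
  proof -
    have "K \<noteq> {}" unfolding K_def by simp
    moreover have "2 * R - 1 \<le> dist (-p) y" if "y \<in> K" for y
    proof -
      have "-p - p = - (2 *\<^sub>R p)" by (simp add: scaleR_2)
      then have "dist (-p) p = 2 * R" using normp by (simp add: dist_norm)
      moreover have "dist p y \<le> 1" using that unfolding K_def by simp
      moreover note dist_triangle[of "-p" p y] dist_commute[of y p]
      ultimately show ?thesis by linarith
    qed
    ultimately show ?thesis by (simp add: infdist_notempty cINF_greatest)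
  qed
  then have "-p \<notin> enlarge K r" unfolding enlarge_def R_def by auto
  with sub inv show False by blast
qed

end
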